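(* Let $\mathcal{X}_1,\mathcal{X}_2$ be non-empty sets, $\mathcal{B}_i\subseteq\mathcal{P}(\mathcal{X}_i)\setminus\{\emptyset\}$ and $\mathcal{D}_i$ a coherent set of desirable gambles on $\mathcal{X}_i$ for $i\in\{1,2\}$. Then $\mathcal{D}_1\otimes\mathcal{D}_2$ is an independent product of $\mathcal{D}_1$ and $\mathcal{D}_2$.
   Context: Gambles on a non-empty set $\mathcal{X}$ are bounded real functions; $\mathcal{G}(\mathcal{X})$ is the set of gambles, $\mathcal{G}_{>0}(\mathcal{X})$ the non-negative non-zero gambles, $\mathbb{I}_A$ the indicator of $A$. For $\mathcal{A}\subseteq\mathcal{G}(\mathcal{X})$: $\mathrm{posi}(\mathcal{A}):=\{\sum_{i=1}^n\lambda_if_i\colon n\in\mathbb{N},\lambda_i>0,f_i\in\mathcal{A}\}$, $\mathcal{E}(\mathcal{A}):=\mathrm{posi}(\mathcal{A}\cup\mathcal{G}_{>0}(\mathcal{X}))$. A coherent set of desirable gambles $\mathcal{D}\subseteq\mathcal{G}(\mathcal{X})$ satisfies, for all $f,g\in\mathcal{G}(\mathcal{X})$ and $\lambda>0$: (D1) $f\geq0,f\neq0\Rightarrow f\in\mathcal{D}$; (D2) $f\in\mathcal{D}\Rightarrow\lambda f\in\mathcal{D}$; (D3) $f,g\in\mathcal{D}\Rightarrow f+g\in\mathcal{D}$; (D4) $f\leq0\Rightarrow f\notin\mathcal{D}$. Gambles on $\mathcal{X}_i$ are identified with their cylindrical extensions to $\mathcal{X}_1\times\mathcal{X}_2$, events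 $B\subseteq\mathcal{X}_1$ with $B\times\mathcal{X}_2$ (similarly for $\mathcal{X}_2$). $\mathcal{D}_1\otimes\mathcal{D}_2:=\mathcal{E}(\mathcal{A}_{1\to2}\cup\mathcal{A}_{2\to1})$, where $\mathcal{A}_{1\to2}:=\{f_2(X_2)\mathbb{I}_{B_1}(X_1)\colon f_2\in\mathcal{D}_2,B_1\in\mathcal{B}_1\cup\{\mathcal{X}_1\}\}$ and $\mathcal{A}_{2\to1}:=\{f_1(X_1)\mathbb{I}_{B_2}(X_2)\colon f_1\in\mathcal{D}_1,B_2\in\mathcal{B}_2\cup\{\mathcal{X}_2\}\}$. For $\mathcal{D}$ on $\mathcal{X}_1\times\mathcal{X}_2$ and $\{i,j\}=\{1,2\}$: $\mathrm{marg}_i(\mathcal{D}):=\{f\in\mathcal{G}(\mathcal{X}_i)\colon f(X_i)\in\mathcal{D}\}$, $\mathrm{marg}_i(\mathcal{D}\rfloor B_j):=\{f\in\mathcal{G}(\mathcal{X}_i)\colon f(X_i)\mathbb{I}_{B_j}(X_j)\in\mathcal{D}\}$. A coherent $\mathcal{D}$ on $\mathcal{X}_1\times\mathcal{X}_2$ is epistemically independent if $\mathrm{marg}_i(\mathcal{D}\rfloor B_j)=\mathrm{marg}_i(\mathcal{D})$ for all $\{i,j\}=\{1,2\}$ and $B_j\in\mathcal{B}_j$. An independent product of $\mathcal{D}_1,\mathcal{D}_2$ is an epistemically independent coherent set of desirable gambles $\mathcal{D}$ on $\mathcal{X}_1\times\mathcal{X}_2$ with $\mathrm{marg}_1(\mathcal{D})=\mathcal{D}_1$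 and $\mathrm{marg}_2(\mathcal{D})=\mathcal{D}_2$. *)

theory Defs
  imports "HOL-Library.Indicator_Function"
begin

text \<open>The possibility spaces X1, X2 are modelled as (nonempty) types 'a, 'b.
  Gambles are bounded real-valued functions.\<close>

definition gambles :: "('a \<Rightarrow> real) set" where
  "gambles = {f. \<exists>c. \<forall>x. \<bar>f x\<bar> \<le> c}"

definition pos_gambles :: "('a \<Rightarrow> real) set" where
  "pos_gambles = {f \<in> gambles. (\<forall>x. 0 \<le> f x) \<and> f \<noteq> (\<lambda>_. 0)}"

definition posi :: "('a \<Rightarrow> real) set \<Rightarrow> ('a \<Rightarrow> real) set" where
  "posi A = {g. \<exists>n::nat. n \<ge> 1 \<and> (\<exists>lam fs. (\<forall>i<n. lam i > (0::real) \<and> fs i \<in> A)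
                 \<and> g = (\<lambda>x. \<Sum>i<n. lam i * fs i x))}"

definition natext :: "('a \<Rightarrow> real) set \<Rightarrow> ('a \<Rightarrow> real) set" where
  "natext A = posi (A \<union> pos_gambles)"

definition coherent :: "('a \<Rightarrow> real) set \<Rightarrow> bool" where
  "coherent D \<longleftrightarrow> D \<subseteq> gambles \<and>
     (\<forall>f\<in>gambles. (\<forall>x. 0 \<le> f x) \<and> f \<noteq> (\<lambda>_. 0) \<longrightarrow> f \<in> D) \<and>
     (\<forall>f\<in>gambles. \<forall>lam::real. f \<in> D \<and> lam > 0 \<longrightarrow> (\<lambda>x. lam * f x) \<in> D) \<and>
     (\<forall>f\<in>gambles. \<forall>g\<in>gambles. f \<in> D \<and> g \<in> D \<longrightarrow> (\<lambda>x. f x + g x) \<in> D) \<and>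
     (\<forall>f\<in>gambles. (\<forall>x. f x \<le> 0) \<longrightarrow> f \<notin> D)"

definition A12 :: "'a set set \<Rightarrow> ('b \<Rightarrow> real) set \<Rightarrow> ('a \<times> 'b \<Rightarrow> real) set" where
  "A12 \<B>1 D2 = {(\<lambda>(x, y). f2 y * indicator B1 x) | f2 B1. f2 \<in> D2 \<and> B1 \<in> \<B>1 \<union> {UNIV}}"

definition A21 :: "'b set set \<Rightarrow> ('a \<Rightarrow> real) set \<Rightarrow> ('a \<times> 'b \<Rightarrow> real) set" where
  "A21 \<B>2 D1 = {(\<lambda>(x, y). f1 x * indicator B2 y) | f1 B2. f1 \<in> D1 \<and> B2 \<in> \<B>2 \<union> {UNIV}}"

definition indep_natext ::
  "'a set set \<Rightarrow> 'b set set \<Rightarrow> ('a \<Rightarrow> real) set \<Rightarrow> ('b \<Rightarrow> real) set \<Rightarrow> ('a \<times> 'b \<Rightarrow> real) set" where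
  "indep_natext \<B>1 \<B>2 D1 D2 = natext (A12 \<B>1 D2 \<union> A21 \<B>2 D1)"

definition marg1 :: "('a \<times> 'b \<Rightarrow> real) set \<Rightarrow> ('a \<Rightarrow> real) set" where
  "marg1 D = {f \<in> gambles. (\<lambda>(x, y). f x) \<in> D}"

definition marg2 :: "('a \<times> 'b \<Rightarrow> real) set \<Rightarrow> ('b \<Rightarrow> real) set" where
  "marg2 D = {f \<in> gambles. (\<lambda>(x, y). f y) \<in> D}"

definition marg1_cond :: "('a \<times> 'b \<Rightarrow> real) set \<Rightarrow> 'b set \<Rightarrow> ('a \<Rightarrow> real) set" where
  "marg1_cond D B2 = {f \<in> gambles. (\<lambda>(x, y). f x * indicator B2 y) \<in> D}"

definition marg2_cond :: "('a \<times> 'b \<Rightarrow> real) set \<Rightarrow> 'a set \<Rightarrow> ('b \<Rightarrow> real) set" where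
  "marg2_cond D B1 = {f \<in> gambles. (\<lambda>(x, y). f y * indicator B1 x) \<in> D}"

definition epistemically_independent ::
  "'a set set \<Rightarrow> 'b set set \<Rightarrow> ('a \<times> 'b \<Rightarrow> real) set \<Rightarrow> bool" where
  "epistemically_independent \<B>1 \<B>2 D \<longleftrightarrow> coherent D \<and>
     (\<forall>B2\<in>\<B>2. marg1_cond D B2 = marg1 D) \<and>
     (\<forall>B1\<in>\<B>1. marg2_cond D B1 = marg2 D)"

definition independent_product ::
  "'a set set \<Rightarrow> 'b set set \<Rightarrow> ('a \<Rightarrow> real) set \<Rightarrow> ('b \<Rightarrow> real) set \<Rightarrow> ('a \<times> 'b \<Rightarrow> real) set \<Rightarrow> bool" where
  "independent_product \<B>1 \<B>2 D1 D2 D \<longleftrightarrow> epistemically_independent \<B>1 \<B>2 D \<and>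
     marg1 D = D1 \<and> marg2 D = D2"

end

theory Submission
  imports Defs
begin

lemma gordan:
  fixes v :: "'i \<Rightarrow> 'j \<Rightarrow> real"
  assumes "finite I" "finite J"
  and "\<forall>\<mu>. (\<forall>i\<in>I. \<mu> i \<ge> 0) \<and> (\<forall>j\<in>J. (\<Sum>i\<in>I. \<mu> i * v i j) = 0) \<longrightarrow> (\<forall>i\<in>I. \<mu> i = 0)"
  shows "\<exists>p. \<forall>i\<in>I. (\<Sum>j\<in>J. p j * v i j) > 0"
  using assms(1,3)
proof (induction I arbitrary: v rule: finite_induct)
  case empty then show ?case by auto
next
  case (insert w F)
  have PF: "\<forall>\<mu>. (\<forall>i\<in>F. \<mu> i \<ge> 0) \<and> (\<forall>j\<in>J. (\<Sum>i\<in>F. \<mu> i * v i j) = 0) \<longrightarrow> (\<forall>i\<in>F. \<mu> i = 0)"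
  proof (intro allI impI)
    fix \<mu> assume h: "(\<forall>i\<in>F. \<mu> i \<ge> 0) \<and> (\<forall>j\<in>J. (\<Sum>i\<in>F. \<mu> i * v i j) = 0)"
    define \<mu>' where "\<mu>' = \<mu>(w := 0)"
    have "\<forall>i\<in>insert w F. \<mu>' i \<ge> 0" using h by (auto simp: \<mu>'_def)
    moreover have "\<forall>j\<in>J. (\<Sum>i\<in>insert w F. \<mu>' i * v i j) = 0"
    proof
      fix j assume j: "j \<in> J"
      have "(\<Sum>i\<in>insert w F. \<mu>' i * v i j) = (\<Sum>i\<in>F. \<mu>' i * v i j)"
        using insert.hyps by (simp add: \<mu>'_def)
      also have "\<dots> = (\<Sum>i\<in>F. \<mu> i * v i j)"
        using insert.hyps by (intro sum.cong) (auto simp: \<mu>'_def)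
      finally show "(\<Sum>i\<in>insert w F. \<mu>' i * v i j) = 0" using h j by simp
    qed
    ultimately have "\<forall>i\<in>insert w F. \<mu>' i = 0" using insert.prems by blast
    then show "\<forall>i\<in>F. \<mu> i = 0" using insert.hyps by (auto simp: \<mu>'_def split: if_splits)
  qed
  obtain p where p: "\<forall>i\<in>F. (\<Sum>j\<in>J. p j * v i j) > 0" using insert.IH[OF PF] by blast
  define c where "c = (\<Sum>j\<in>J. p j * v w j)"
  define cc where "cc i = (\<Sum>j\<in>J. p j * v i j)" for i
  have ccpos: "\<forall>i\<in>F. cc i > 0" using p by (simp add: cc_def)
  show ?case
  proof (cases "c > 0")
    case True
    then show ?thesis using p by (auto simp: c_def intro!: exI[of _ p])
  next
    case cnp: False
    show ?thesis
    proof (cases "F = {}")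
      case True
      have "(\<Sum>j\<in>J. v w j * v w j) > 0"
      proof (rule ccontr)
        assume "\<not> ?thesis"
        moreover have "(\<Sum>j\<in>J. v w j * v w j) \<ge> 0" by (intro sum_nonneg) auto
        ultimately have "(\<Sum>j\<in>J. v w j * v w j) = 0" by linarith
        then have z: "\<forall>j\<in>J. v w j * v w j = 0"
          using assms(2) by (subst (asm) sum_nonneg_eq_0_iff) auto
        have "\<forall>j\<in>J. v w j = 0" using z by simp
        then show False using insert.prems[THEN spec[of _ "\<lambda>_. 1"]] True by simp
      qed
      then show ?thesis using True by (auto intro!: exI[of _ "v w"])
    next
      case Fne: False
      define u where "u i j = cc i * v w j - c * v i j" for i j
      have PU: "\<forall>\<mu>. (\<forall>i\<in>F. \<mu> i \<ge> 0) \<and> (\<forall>j\<in>J. (\<Sum>i\<in>F. \<mu> i * u i j) = 0) \<longrightarrow> (\<forall>i\<in>F. \<mu> i = 0)"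
      proof (intro allI impI)
        fix \<mu> assume h: "(\<forall>i\<in>F. \<mu> i \<ge> 0) \<and> (\<forall>j\<in>J. (\<Sum>i\<in>F. \<mu> i * u i j) = 0)"
        define \<mu>' where "\<mu>' = (\<lambda>i. - c * \<mu> i)(w := (\<Sum>i\<in>F. \<mu> i * cc i))"
        have "\<forall>i\<in>insert w F. \<mu>' i \<ge> 0" using h cnp ccpos
          by (auto simp: \<mu>'_def mult_nonpos_nonneg intro!: sum_nonneg mult_nonneg_nonneg)
        moreover have "\<forall>j\<in>J. (\<Sum>i\<in>insert w F. \<mu>' i * v i j) = 0"
        proof
          fix j assume j: "j \<in> J"
          have "(\<Sum>i\<in>insert w F. \<mu>' i * v i j) = (\<Sum>i\<in>F. \<mu> i * cc i) * v w j + (\<Sum>i\<in>F. \<mu>' i * v i j)"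
            using insert.hyps by (simp add: \<mu>'_def)
          also have "(\<Sum>i\<in>F. \<mu>' i * v i j) = (\<Sum>i\<in>F. - c * \<mu> i * v i j)"
            using insert.hyps by (intro sum.cong) (auto simp: \<mu>'_def)
          also have "(\<Sum>i\<in>F. \<mu> i * cc i) * v w j + (\<Sum>i\<in>F. - c * \<mu> i * v i j) = (\<Sum>i\<in>F. \<mu> i * u i j)"
          proof -
            have e1: "(\<Sum>i\<in>F. \<mu> i * cc i) * v w j = (\<Sum>i\<in>F. \<mu> i * cc i * v w j)"
              by (simp add: sum_distrib_right)
            have e2: "(\<Sum>i\<in>F. \<mu> i * u i j) = (\<Sum>i\<in>F. \<mu> i * cc i * v w j - c * \<mu> i * v i j)"
              by (rule sum.cong) (simp_all add: u_def algebra_simps)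
            have e3: "(\<Sum>i\<in>F. \<mu> i * cc i * v w j - c * \<mu> i * v i j) = (\<Sum>i\<in>F. \<mu> i * cc i * v w j) - (\<Sum>i\<in>F. c * \<mu> i * v i j)"
              by (rule sum_subtractf)
            have e4: "(\<Sum>i\<in>F. - c * \<mu> i * v i j) = - (\<Sum>i\<in>F. c * \<mu> i * v i j)"
              by (simp add: sum_negf)
            show ?thesis using e1 e2 e3 e4 by simp
          qed
          finally show "(\<Sum>i\<in>insert w F. \<mu>' i * v i j) = 0" using h j by simp
        qed
        ultimately have z: "\<forall>i\<in>insert w F. \<mu>' i = 0" using insert.prems by blast
        then have "(\<Sum>i\<in>F. \<mu> i * cc i) = 0" by (simp add: \<mu>'_def)
        then have "\<forall>i\<in>F. \<mu> i * cc i = 0"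
          using insert.hyps h ccpos by (subst (asm) sum_nonneg_eq_0_iff) auto
        then show "\<forall>i\<in>F. \<mu> i = 0" using ccpos by (metis less_irrefl mult_eq_0_iff)
      qed
      obtain q where q: "\<forall>i\<in>F. (\<Sum>j\<in>J. q j * u i j) > 0" using insert.IH[OF PU] by blast
      define qw where "qw = (\<Sum>j\<in>J. q j * v w j)"
      define qv where "qv i = (\<Sum>j\<in>J. q j * v i j)" for i
      have quv: "\<forall>i\<in>F. cc i * qw - c * qv i > 0"
      proof
        fix i assume "i \<in> F"
        then have "(\<Sum>j\<in>J. q j * u i j) > 0" using q by blast
        also have "(\<Sum>j\<in>J. q j * u i j) = cc i * qw - c * qv i"
          by (simp add: u_def qw_def qv_def right_diff_distrib sum_subtractf sum_distrib_left algebra_simps)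
        finally show "cc i * qw - c * qv i > 0" .
      qed
      define s where "s = (if c < 0 then (\<bar>qw\<bar> + 1) / c else 0)"
      define W where "W = qw + s * c"
      define V where "V i = qv i + s * cc i" for i
      have Wpos: "W > 0"
      proof (cases "c < 0")
        case True then show ?thesis by (simp add: W_def s_def)
      next
        case False
        then have c0: "c = 0" using cnp by simp
        obtain i0 where "i0 \<in> F" using Fne by blast
        then have "cc i0 * qw > 0" "cc i0 > 0" using quv ccpos c0 by auto
        then have "qw > 0" using zero_less_mult_pos by blast
        then show ?thesis by (simp add: W_def s_def c0)
      qed
      have VW: "\<forall>i\<in>F. cc i * W - c * V i > 0"
        using quv by (simp add: W_def V_def algebra_simps)
      define M where "M = Max ((\<lambda>i. - V i / cc i) ` F)"
      have finF: "finite F" by fact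
      have Mge: "\<forall>i\<in>F. - V i / cc i \<le> M" using finF by (auto simp: M_def)
      have "M \<in> (\<lambda>i. - V i / cc i) ` F" unfolding M_def using finF Fne by (intro Max_in) auto
      then obtain i0 where i0: "i0 \<in> F" "M = - V i0 / cc i0" by blast
      define t where "t = (if c < 0 then (M + W / (- c)) / 2 else M + 1)"
      have tlow: "t > M"
      proof (cases "c < 0")
        case True
        have "cc i0 * W - c * V i0 > 0" "cc i0 > 0" using VW ccpos i0 by auto
        then have "- V i0 / cc i0 < W / (- c)" using True
          by (simp add: field_simps)
        then show ?thesis using True i0 by (simp add: t_def)
      qed (simp add: t_def)
      have thigh: "W + t * c > 0"
      proof (cases "c < 0")
        case True
        have "cc i0 * W - c * V i0 > 0" "cc i0 > 0" using VW ccpos i0 by auto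
        then have "- V i0 / cc i0 < W / (- c)" using True
          by (simp add: field_simps)
        then have "t < W / (- c)" using True i0 by (simp add: t_def)
        then have "t * (- c) < W" using True by (simp add: field_simps)
        then show ?thesis by simp
      next
        case False then have "c = 0" using cnp by simp
        then show ?thesis using Wpos by simp
      qed
      define p' where "p' j = q j + (s + t) * p j" for j
      show ?thesis
      proof (intro exI ballI)
        fix i assume i: "i \<in> insert w F"
        have lin: "(\<Sum>j\<in>J. p' j * v i j) = qv i + s * cc i + t * cc i"
          by (simp add: p'_def qv_def cc_def algebra_simps sum.distrib sum_distrib_left)
        show "(\<Sum>j\<in>J. p' j * v i j) > 0"
        proof (cases "i = w")
          case True
          then have "(\<Sum>j\<in>J. p' j * v i j) = W + t * c"
            using lin by (simp add: qv_def qw_def cc_def c_def W_def algebra_simps)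
          then show ?thesis using thigh by simp
        next
          case False
          then have iF: "i \<in> F" using i by simp
          have "- V i / cc i < t" using Mge iF tlow by force
          then have "- V i < t * cc i" using ccpos iF by (simp add: field_simps)
          then show ?thesis using lin by (simp add: V_def)
        qed
      qed
    qed
  qed
qed

lemma ville:
  fixes v :: "'i \<Rightarrow> 'j \<Rightarrow> real"
  assumes fI: "finite I" and fJ: "finite J"
  and P: "\<forall>\<mu>. (\<forall>i\<in>I. \<mu> i \<ge> 0) \<and> (\<forall>j\<in>J. (\<Sum>i\<in>I. \<mu> i * v i j) \<le> 0) \<longrightarrow> (\<forall>i\<in>I. \<mu> i = 0)"
  shows "\<exists>p. (\<forall>j\<in>J. p j > 0) \<and> (\<forall>i\<in>I. (\<Sum>j\<in>J. p j * v i j) > 0)"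
proof -
  define v' where "v' k = (case k of Inl i \<Rightarrow> v i | Inr j0 \<Rightarrow> (\<lambda>j. if j = j0 then 1 else 0))" for k
  have "\<exists>p. \<forall>k\<in>I <+> J. (\<Sum>j\<in>J. p j * v' k j) > 0"
  proof (rule gordan)
    show "finite (I <+> J)" using fI fJ by simp
    show "finite J" by fact
    show "\<forall>\<mu>. (\<forall>k\<in>I <+> J. 0 \<le> \<mu> k) \<and> (\<forall>j\<in>J. (\<Sum>k\<in>I <+> J. \<mu> k * v' k j) = 0) \<longrightarrow>
      (\<forall>k\<in>I <+> J. \<mu> k = 0)"
    proof (intro allI impI)
      fix \<mu> :: "'i + 'j \<Rightarrow> real"
      assume h: "(\<forall>k\<in>I <+> J. 0 \<le> \<mu> k) \<and> (\<forall>j\<in>J. (\<Sum>k\<in>I <+> J. \<mu> k * v' k j) = 0)"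
      have eq: "(\<Sum>k\<in>I <+> J. \<mu> k * v' k j) = (\<Sum>i\<in>I. \<mu> (Inl i) * v i j) + \<mu> (Inr j)" if "j \<in> J" for j
      proof -
        have "(\<Sum>x\<in>J. \<mu> (Inr x) * (if j = x then 1 else 0)) = (\<Sum>x\<in>J. if j = x then \<mu> (Inr x) else 0)"
          by (rule sum.cong) auto
        also have "\<dots> = \<mu> (Inr j)" using fJ that by simp
        finally show ?thesis using fI fJ by (simp add: sum.Plus v'_def comp_def)
      qed
      have "\<forall>j\<in>J. (\<Sum>i\<in>I. \<mu> (Inl i) * v i j) \<le> 0"
      proof
        fix j assume j: "j \<in> J"
        have "\<mu> (Inr j) \<ge> 0" using h j by auto
        then show "(\<Sum>i\<in>I. \<mu> (Inl i) * v i j) \<le> 0" using h j eq[OF j] by auto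
      qed
      moreover have "\<forall>i\<in>I. \<mu> (Inl i) \<ge> 0" using h by auto
      ultimately have z: "\<forall>i\<in>I. \<mu> (Inl i) = 0" using P[THEN spec[of _ "\<lambda>i. \<mu> (Inl i)"]] by blast
      have "\<forall>j\<in>J. \<mu> (Inr j) = 0"
      proof
        fix j assume j: "j \<in> J"
        have "(\<Sum>i\<in>I. \<mu> (Inl i) * v i j) = 0" using z by simp
        then show "\<mu> (Inr j) = 0" using h j eq[OF j] by auto
      qed
      then show "\<forall>k\<in>I <+> J. \<mu> k = 0" using z by auto
    qed
  qed
  then obtain p where p: "\<forall>k\<in>I <+> J. (\<Sum>j\<in>J. p j * v' k j) > 0" by blast
  have "\<forall>j\<in>J. p j > 0"
  proof
    fix j0 assume j0: "j0 \<in> J"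
    then have "(\<Sum>j\<in>J. p j * v' (Inr j0) j) > 0" using p by auto
    moreover have "(\<Sum>j\<in>J. p j * v' (Inr j0) j) = p j0"
    proof -
      have "(\<Sum>j\<in>J. p j * v' (Inr j0) j) = (\<Sum>j\<in>J. if j = j0 then p j else 0)"
        by (rule sum.cong) (auto simp: v'_def)
      then show ?thesis using fJ j0 by simp
    qed
    ultimately show "p j0 > 0" by simp
  qed
  moreover have "\<forall>i\<in>I. (\<Sum>j\<in>J. p j * v i j) > 0"
  proof
    fix i assume "i \<in> I"
    then have "Inl i \<in> I <+> J" by (rule InlI)
    from p[rule_format, OF this] show "(\<Sum>j\<in>J. p j * v i j) > 0" by (simp add: v'_def)
  qed
  ultimately show ?thesis by blast
qed

lemma gambles_iff: "f \<in> gambles \<longleftrightarrow> (\<exists>c. \<forall>x. \<bar>f x\<bar> \<le> c)"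
  by (simp add: gambles_def)

lemma gambles_add: "f \<in> gambles \<Longrightarrow> g \<in> gambles \<Longrightarrow> (\<lambda>x. f x + g x) \<in> gambles"
  unfolding gambles_def
proof clarsimp
  fix c d assume c: "\<forall>x. \<bar>f x\<bar> \<le> c" and d: "\<forall>x. \<bar>g x\<bar> \<le> d"
  show "\<exists>e. \<forall>x. \<bar>f x + g x\<bar> \<le> e"
    by (rule exI[of _ "c + d"]) (metis abs_triangle_ineq add_mono c d order_trans)
qed

lemma gambles_scale: "f \<in> gambles \<Longrightarrow> (\<lambda>x. c * f x) \<in> gambles"
proof -
  assume "f \<in> gambles"
  then obtain d where d: "\<forall>x. \<bar>f x\<bar> \<le> d" by (auto simp: gambles_def)
  have "\<forall>x. \<bar>c * f x\<bar> \<le> \<bar>c\<bar> * d" by (simp add: abs_mult d mult_left_mono)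
  then show ?thesis by (auto simp: gambles_def)
qed

lemma gambles_zero: "(\<lambda>_. 0) \<in> gambles" by (auto simp: gambles_def intro: exI[of _ 0])

lemma gambles_sum: "finite S \<Longrightarrow> (\<forall>i\<in>S. h i \<in> gambles) \<Longrightarrow> (\<lambda>x. \<Sum>i\<in>S. c i * h i x) \<in> gambles"
proof (induction S rule: finite_induct)
  case empty then show ?case using gambles_zero by simp
next
  case (insert a F)
  then show ?case using gambles_add[OF gambles_scale[of "h a" "c a"]] by simp
qed

lemma gambles_minus: "f \<in> gambles \<Longrightarrow> g \<in> gambles \<Longrightarrow> (\<lambda>x. f x - \<mu> * g x) \<in> gambles"
  using gambles_add[OF _ gambles_scale[of g "-\<mu>"]] by simp

lemma coherentD:
  assumes "coherent D"
  shows "D \<subseteq> gambles"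
    and "f \<in> gambles \<Longrightarrow> (\<forall>x. 0 \<le> f x) \<Longrightarrow> f \<noteq> (\<lambda>_. 0) \<Longrightarrow> f \<in> D"
    and "f \<in> D \<Longrightarrow> lam > 0 \<Longrightarrow> (\<lambda>x. lam * f x) \<in> D"
    and "f \<in> D \<Longrightarrow> g \<in> D \<Longrightarrow> (\<lambda>x. f x + g x) \<in> D"
    and "f \<in> D \<Longrightarrow> \<exists>x. f x > 0"
proof -
  show "D \<subseteq> gambles" using assms unfolding coherent_def by blast
  show "f \<in> gambles \<Longrightarrow> (\<forall>x. 0 \<le> f x) \<Longrightarrow> f \<noteq> (\<lambda>_. 0) \<Longrightarrow> f \<in> D"
    using assms unfolding coherent_def by blast
  show "f \<in> D \<Longrightarrow> lam > 0 \<Longrightarrow> (\<lambda>x. lam * f x) \<in> D"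
    using assms unfolding coherent_def by blast
  show "f \<in> D \<Longrightarrow> g \<in> D \<Longrightarrow> (\<lambda>x. f x + g x) \<in> D"
    using assms unfolding coherent_def by blast
  show "f \<in> D \<Longrightarrow> \<exists>x. f x > 0"
  proof -
    assume f: "f \<in> D"
    have "f \<in> gambles" using f assms unfolding coherent_def by blast
    then have "\<not> (\<forall>x. f x \<le> 0)" using f assms unfolding coherent_def by blast
    then show ?thesis by (simp add: not_le)
  qed
qed

lemma coherent_dom:
  assumes "coherent D" "f \<in> D" "h \<in> gambles" "\<forall>x. f x \<le> h x"
  shows "h \<in> D"
proof (cases "(\<lambda>x. h x - f x) = (\<lambda>_. 0)")
  case True
  then have "h = f" by (metis (no_types) eq_iff_diff_eq_0 ext)
  then show ?thesis using assms by simp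
next
  case False
  have fg: "f \<in> gambles" using coherentD(1)[OF assms(1)] assms(2) by blast
  have "(\<lambda>x. h x - 1 * f x) \<in> gambles" by (rule gambles_minus[OF assms(3) fg])
  then have "(\<lambda>x. h x - f x) \<in> D" using coherentD(2)[OF assms(1)] False assms(4) by simp
  from coherentD(4)[OF assms(1) assms(2) this] show ?thesis by simp
qed

lemma coherent_sum:
  assumes cD: "coherent D"
  shows "finite S \<Longrightarrow> (\<forall>s\<in>S. c s \<ge> 0 \<and> h s \<in> D) \<Longrightarrow> (\<exists>s\<in>S. c s > 0) \<Longrightarrow> (\<lambda>y. \<Sum>s\<in>S. c s * h s y) \<in> D"
proof (induction S rule: finite_induct)
  case empty then show ?case by simp
next
  case (insert a F)
  have eq: "(\<lambda>y. \<Sum>s\<in>insert a F. c s * h s y) = (\<lambda>y. c a * h a y + (\<Sum>s\<in>F. c s * h s y))"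
    using insert.hyps by simp
  show ?case
  proof (cases "\<exists>s\<in>F. c s > 0")
    case True
    then have r: "(\<lambda>y. \<Sum>s\<in>F. c s * h s y) \<in> D" using insert by auto
    show ?thesis
    proof (cases "c a > 0")
      case True
      have "(\<lambda>y. c a * h a y) \<in> D" using coherentD(3)[OF cD _ True] insert.prems by auto
      from coherentD(4)[OF cD this r] show ?thesis using eq by simp
    next
      case False
      then have "c a = 0" using insert.prems by force
      then show ?thesis using eq r by simp
    qed
  next
    case False
    then have z: "\<forall>s\<in>F. c s = 0" using insert.prems by force
    then have "\<forall>y. (\<Sum>s\<in>F. c s * h s y) = 0" by simp
    moreover have ca: "c a > 0" using False insert.prems by auto
    ultimately show ?thesis using eq coherentD(3)[OF cD _ ca] insert.prems by auto
  qed
qed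

lemma sum_split_add: "(\<Sum>i<n+m. h i) = (\<Sum>i<n. h i) + (\<Sum>i<m. h (n+i::nat)) " for h :: "nat \<Rightarrow> real"
  by (induct m) simp_all

lemma posi_iff: "g \<in> posi A \<longleftrightarrow> (\<exists>n::nat\<ge>1. \<exists>lam fs. (\<forall>i<n. lam i > (0::real) \<and> fs i \<in> A) \<and> g = (\<lambda>x. \<Sum>i<n. lam i * fs i x))"
  by (simp add: posi_def)

lemma natext_base: "f \<in> A \<or> f \<in> pos_gambles \<Longrightarrow> f \<in> natext A"
  unfolding natext_def posi_iff
  by (rule exI[of _ 1]) (auto intro!: exI[of _ "\<lambda>_. 1"] exI[of _ "\<lambda>_. f"])

lemma natext_scale: "g \<in> natext A \<Longrightarrow> c > 0 \<Longrightarrow> (\<lambda>x. c * g x) \<in> natext A"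
  unfolding natext_def posi_iff
proof (elim exE conjE)
  fix n :: nat and lam fs assume n: "1 \<le> n" and h: "\<forall>i<n. 0 < lam i \<and> fs i \<in> A \<union> pos_gambles"
    and g: "g = (\<lambda>x. \<Sum>i<n. lam i * fs i x)" and c: "c > 0"
  show "\<exists>n::nat\<ge>1. \<exists>lam fs. (\<forall>i<n. 0 < lam i \<and> fs i \<in> A \<union> pos_gambles) \<and> (\<lambda>x. c * g x) = (\<lambda>x. \<Sum>i<n. lam i * fs i x)"
  proof (intro exI[of _ n] conjI exI[of _ "\<lambda>i. c * lam i"] exI[of _ fs])
    show "1 \<le> n" by fact
    show "\<forall>i<n. 0 < c * lam i \<and> fs i \<in> A \<union> pos_gambles" using h c by auto
    show "(\<lambda>x. c * g x) = (\<lambda>x. \<Sum>i<n. c * lam i * fs i x)" by (simp add: g sum_distrib_left mult.assoc)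
  qed
qed

lemma natext_add: "g \<in> natext A \<Longrightarrow> h \<in> natext A \<Longrightarrow> (\<lambda>x. g x + h x) \<in> natext A"
  unfolding natext_def posi_iff
proof (elim exE conjE)
  fix n m :: nat and lam fs lam' fs' assume n: "1 \<le> n" and hh: "\<forall>i<n. 0 < lam i \<and> fs i \<in> A \<union> pos_gambles"
    and g: "g = (\<lambda>x. \<Sum>i<n. lam i * fs i x)"
    and m: "1 \<le> m" and hh': "\<forall>i<m. 0 < lam' i \<and> fs' i \<in> A \<union> pos_gambles"
    and h: "h = (\<lambda>x. \<Sum>i<m. lam' i * fs' i x)"
  define L where "L i = (if i < n then lam i else lam' (i - n))" for i
  define Fs where "Fs i = (if i < n then fs i else fs' (i - n))" for i
  have "\<forall>i<n+m. 0 < L i \<and> Fs i \<in> A \<union> pos_gambles"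
    using hh hh' by (auto simp: L_def Fs_def)
  moreover have "(\<lambda>x. g x + h x) = (\<lambda>x. \<Sum>i<n+m. L i * Fs i x)"
  proof
    fix x
    have "(\<Sum>i<n+m. L i * Fs i x) = (\<Sum>i<n. L i * Fs i x) + (\<Sum>i<m. L (n+i) * Fs (n+i) x)"
      by (rule sum_split_add)
    also have "(\<Sum>i<n. L i * Fs i x) = g x" by (simp add: g L_def Fs_def)
    also have "(\<Sum>i<m. L (n+i) * Fs (n+i) x) = h x" by (simp add: h L_def Fs_def)
    finally show "g x + h x = (\<Sum>i<n+m. L i * Fs i x)" by simp
  qed
  ultimately show "\<exists>n::nat\<ge>1. \<exists>lam fs. (\<forall>i<n. 0 < lam i \<and> fs i \<in> A \<union> pos_gambles) \<and> (\<lambda>x. g x + h x) = (\<lambda>x. \<Sum>i<n. lam i * fs i x)"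
    using n by (intro exI[of _ "n+m"]) auto
qed

lemma natext_mono: "A \<subseteq> B \<Longrightarrow> natext A \<subseteq> natext B"
  unfolding natext_def posi_def by blast

lemma pos_gambles_sub: "pos_gambles \<subseteq> gambles" by (auto simp: pos_gambles_def)

lemma natext_gambles: "A \<subseteq> gambles \<Longrightarrow> natext A \<subseteq> gambles"
  unfolding natext_def posi_def using pos_gambles_sub
  by (auto intro!: gambles_sum)

lemma coherent_natext:
  fixes A :: "('a \<Rightarrow> real) set"
  assumes "A \<subseteq> gambles" and "\<forall>g\<in>natext A. \<exists>z. g z > 0"
  shows "coherent (natext A)"
  unfolding coherent_def
proof (intro conjI ballI allI impI)
  show "natext A \<subseteq> gambles" using natext_gambles[OF assms(1)] .
  fix f :: "'a \<Rightarrow> real" assume "f \<in> gambles"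
  { assume "(\<forall>x. 0 \<le> f x) \<and> f \<noteq> (\<lambda>_. 0)"
    then show "f \<in> natext A" using \<open>f \<in> gambles\<close> by (intro natext_base) (simp add: pos_gambles_def) }
  { fix lam :: real assume "f \<in> natext A \<and> lam > 0"
    then show "(\<lambda>x. lam * f x) \<in> natext A" using natext_scale by blast }
  { fix g assume "f \<in> natext A \<and> g \<in> natext A"
    then show "(\<lambda>x. f x + g x) \<in> natext A" using natext_add by blast }
  { assume "\<forall>x. f x \<le> 0"
    then show "f \<notin> natext A" using assms(2) by (meson not_le) }
qed

lemma core:
  fixes \<B>1 :: "'a set set" and \<B>2 :: "'b set set"
    and D1 :: "('a \<Rightarrow> real) set" and D2 :: "('b \<Rightarrow> real) set"
  assumes B1: "{} \<notin> \<B>1" and B2: "{} \<notin> \<B>2" and cD1: "coherent D1" and cD2: "coherent D2"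
    and g: "g \<in> natext (A12 \<B>1 D2 \<union> A21 \<B>2 D1)"
  shows "\<exists>z. g z > 0"
proof (rule ccontr)
  assume ng: "\<not> (\<exists>z. g z > 0)"
  have gle: "g (x, y) \<le> 0" for x y using ng not_le by blast
  from g obtain n :: nat and lam fs where n: "1 \<le> n"
    and hfs: "\<forall>i<n. 0 < lam i \<and> fs i \<in> A12 \<B>1 D2 \<union> A21 \<B>2 D1 \<union> pos_gambles"
    and geq: "g = (\<lambda>z. \<Sum>i<n. lam i * fs i z)"
    unfolding natext_def posi_iff by blast
  define T1 where "T1 = {i. i < n \<and> fs i \<in> A12 \<B>1 D2}"
  define T2 where "T2 = {i. i < n \<and> fs i \<notin> A12 \<B>1 D2 \<and> fs i \<in> A21 \<B>2 D1}"
  define T3 where "T3 = {i. i < n \<and> fs i \<notin> A12 \<B>1 D2 \<and> fs i \<notin> A21 \<B>2 D1}"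
  have finT: "finite T1" "finite T2" "finite T3" by (auto simp: T1_def T2_def T3_def)
  have "\<forall>i\<in>T1. \<exists>ac. fst ac \<in> D2 \<and> snd ac \<in> \<B>1 \<union> {UNIV} \<and> fs i = (\<lambda>(x,y). fst ac y * indicator (snd ac) x)"
  proof
    fix i assume "i \<in> T1"
    then obtain f2 B where "fs i = (\<lambda>(x,y). f2 y * indicator B x)" "f2 \<in> D2" "B \<in> \<B>1 \<union> {UNIV}"
      by (auto simp: T1_def A12_def)
    then show "\<exists>ac. fst ac \<in> D2 \<and> snd ac \<in> \<B>1 \<union> {UNIV} \<and> fs i = (\<lambda>(x,y). fst ac y * indicator (snd ac) x)"
      by (intro exI[of _ "(f2, B)"]) simp
  qed
  then have "\<exists>ac. \<forall>i\<in>T1. fst (ac i) \<in> D2 \<and> snd (ac i) \<in> \<B>1 \<union> {UNIV} \<and> fs i = (\<lambda>(x,y). fst (ac i) y * indicator (snd (ac i)) x)"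
    by (rule bchoice)
  then obtain ac where ac: "\<forall>i\<in>T1. fst (ac i) \<in> D2 \<and> snd (ac i) \<in> \<B>1 \<union> {UNIV} \<and> fs i = (\<lambda>(x,y). fst (ac i) y * indicator (snd (ac i)) x)"
    by blast
  define a where "a i = fst (ac i)" for i
  define C where "C i = snd (ac i)" for i
  have aD: "\<forall>i\<in>T1. a i \<in> D2" and CB: "\<forall>i\<in>T1. C i \<in> \<B>1 \<union> {UNIV}"
    and fsa: "\<forall>i\<in>T1. fs i = (\<lambda>(x,y). a i y * indicator (C i) x)"
    using ac by (auto simp: a_def C_def)
  have "\<forall>i\<in>T2. \<exists>be. fst be \<in> D1 \<and> snd be \<in> \<B>2 \<union> {UNIV} \<and> fs i = (\<lambda>(x,y). fst be x * indicator (snd be) y)"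
  proof
    fix i assume "i \<in> T2"
    then obtain f1 B where "fs i = (\<lambda>(x,y). f1 x * indicator B y)" "f1 \<in> D1" "B \<in> \<B>2 \<union> {UNIV}"
      by (auto simp: T2_def A21_def)
    then show "\<exists>be. fst be \<in> D1 \<and> snd be \<in> \<B>2 \<union> {UNIV} \<and> fs i = (\<lambda>(x,y). fst be x * indicator (snd be) y)"
      by (intro exI[of _ "(f1, B)"]) simp
  qed
  then have "\<exists>be. \<forall>i\<in>T2. fst (be i) \<in> D1 \<and> snd (be i) \<in> \<B>2 \<union> {UNIV} \<and> fs i = (\<lambda>(x,y). fst (be i) x * indicator (snd (be i)) y)"
    by (rule bchoice)
  then obtain be where be: "\<forall>i\<in>T2. fst (be i) \<in> D1 \<and> snd (be i) \<in> \<B>2 \<union> {UNIV} \<and> fs i = (\<lambda>(x,y). fst (be i) x * indicator (snd (be i)) y)"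
    by blast
  define b where "b i = fst (be i)" for i
  define E where "E i = snd (be i)" for i
  have bD: "\<forall>i\<in>T2. b i \<in> D1" and EB: "\<forall>i\<in>T2. E i \<in> \<B>2 \<union> {UNIV}"
    and fsb: "\<forall>i\<in>T2. fs i = (\<lambda>(x,y). b i x * indicator (E i) y)"
    using be by (auto simp: b_def E_def)
  have fsp: "\<forall>i\<in>T3. fs i \<in> pos_gambles" using hfs by (auto simp: T3_def)
  have lampos: "\<forall>i<n. lam i > 0" using hfs by auto
  define Kf where "Kf x = {i \<in> T1. x \<in> C i}" for x
  define Lf where "Lf y = {i \<in> T2. y \<in> E i}" for y
  define FF where "FF K y = (\<Sum>i\<in>K. lam i * a i y)" for K y
  define GG where "GG L x = (\<Sum>i\<in>L. lam i * b i x)" for L x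
  define HH where "HH z = (\<Sum>i\<in>T3. lam i * fs i z)" for z
  have fsnn: "\<forall>i\<in>T3. fs i z \<ge> 0" for z using fsp by (cases z) (auto simp: pos_gambles_def)
  have HHnn: "HH z \<ge> 0" for z
    unfolding HH_def using fsnn lampos by (intro sum_nonneg) (auto simp: T3_def less_imp_le)
  have decomp: "g (x, y) = FF (Kf x) y + GG (Lf y) x + HH (x, y)" for x y
  proof -
    have U: "{..<n} = T1 \<union> (T2 \<union> T3)" by (auto simp: T1_def T2_def T3_def)
    have "g (x, y) = (\<Sum>i\<in>T1 \<union> (T2 \<union> T3). lam i * fs i (x, y))" using geq U by simp
    also have "\<dots> = (\<Sum>i\<in>T1. lam i * fs i (x, y)) + ((\<Sum>i\<in>T2. lam i * fs i (x, y)) + HH (x, y))"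
    proof -
      have s1: "(\<Sum>i\<in>T1 \<union> (T2 \<union> T3). lam i * fs i (x, y)) = (\<Sum>i\<in>T1. lam i * fs i (x, y)) + (\<Sum>i\<in>T2 \<union> T3. lam i * fs i (x, y))"
        by (rule sum.union_disjoint) (use finT in \<open>auto simp: T1_def T2_def T3_def\<close>)
      have s2: "(\<Sum>i\<in>T2 \<union> T3. lam i * fs i (x, y)) = (\<Sum>i\<in>T2. lam i * fs i (x, y)) + (\<Sum>i\<in>T3. lam i * fs i (x, y))"
        by (rule sum.union_disjoint) (use finT in \<open>auto simp: T1_def T2_def T3_def\<close>)
      show ?thesis using s1 s2 by (simp add: HH_def)
    qed
    also have "(\<Sum>i\<in>T1. lam i * fs i (x, y)) = FF (Kf x) y"
    proof -
      have "(\<Sum>i\<in>T1. lam i * fs i (x, y)) = (\<Sum>i\<in>T1. if x \<in> C i then lam i * a i y else 0)"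
        using fsa by (intro sum.cong) auto
      also have "\<dots> = FF (Kf x) y" unfolding FF_def Kf_def using finT by (simp add: sum.inter_filter)
      finally show ?thesis .
    qed
    also have "(\<Sum>i\<in>T2. lam i * fs i (x, y)) = GG (Lf y) x"
    proof -
      have "(\<Sum>i\<in>T2. lam i * fs i (x, y)) = (\<Sum>i\<in>T2. if y \<in> E i then lam i * b i x else 0)"
        using fsb by (intro sum.cong) auto
      also have "\<dots> = GG (Lf y) x" unfolding GG_def Lf_def using finT by (simp add: sum.inter_filter)
      finally show ?thesis .
    qed
    finally show ?thesis by simp
  qed
  have FFg: "FF K \<in> gambles" if "K \<subseteq> T1" for K
  proof -
    have "finite K" using that finT finite_subset by blast
    moreover have "\<forall>i\<in>K. a i \<in> gambles" using that aD coherentD(1)[OF cD2] by blast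
    ultimately show ?thesis unfolding FF_def by (intro gambles_sum) auto
  qed
  have FFD: "FF K \<in> D2" if "K \<subseteq> T1" "K \<noteq> {}" for K
  proof -
    have "finite K" using that finT finite_subset by blast
    moreover have "\<forall>i\<in>K. lam i \<ge> 0 \<and> a i \<in> D2" using that aD lampos by (force simp: T1_def)
    moreover have "\<exists>i\<in>K. lam i > 0" using that lampos by (force simp: T1_def)
    ultimately have "(\<lambda>y. \<Sum>i\<in>K. lam i * a i y) \<in> D2" by (rule coherent_sum[OF cD2])
    then show ?thesis by (simp add: FF_def[abs_def])
  qed
  have GGD: "GG L \<in> D1" if "L \<subseteq> T2" "L \<noteq> {}" for L
  proof -
    have "finite L" using that finT finite_subset by blast
    moreover have "\<forall>i\<in>L. lam i \<ge> 0 \<and> b i \<in> D1" using that bD lampos by (force simp: T2_def)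
    moreover have "\<exists>i\<in>L. lam i > 0" using that lampos by (force simp: T2_def)
    ultimately have "(\<lambda>y. \<Sum>i\<in>L. lam i * b i y) \<in> D1" by (rule coherent_sum[OF cD1])
    then show ?thesis by (simp add: GG_def[abs_def])
  qed
  define KK where "KK = range Kf"
  define LL where "LL = range Lf"
  have KKsub: "K \<subseteq> T1" if "K \<in> KK" for K using that by (auto simp: KK_def Kf_def)
  have LLsub: "L \<subseteq> T2" if "L \<in> LL" for L using that by (auto simp: LL_def Lf_def)
  have finKK: "finite KK" using finT(1) KKsub by (intro finite_subset[of KK "Pow T1"]) auto
  have finLL: "finite LL" using finT(2) LLsub by (intro finite_subset[of LL "Pow T2"]) auto
  define cell where "cell L = {y. Lf y = L}" for L
  define \<alpha> where "\<alpha> K L = Sup (FF K ` cell L)" for K L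
  have bdd: "bdd_above (FF K ` S)" if K: "K \<subseteq> T1" for K S
  proof -
    obtain c where "\<forall>y. \<bar>FF K y\<bar> \<le> c" using FFg[OF K] by (auto simp: gambles_def)
    then show ?thesis by (intro bdd_aboveI2[of _ _ c]) (simp add: abs_le_iff)
  qed
  have alow: "FF K y \<le> \<alpha> K (Lf y)" if "K \<subseteq> T1" for K y
    unfolding \<alpha>_def using bdd[OF that] by (intro cSup_upper) (auto simp: cell_def)
  have ahigh: "\<alpha> (Kf x) L \<le> - GG L x" if L: "L \<in> LL" for x L
  proof -
    obtain y0 where y0: "L = Lf y0" using L by (auto simp: LL_def)
    show ?thesis unfolding \<alpha>_def
    proof (rule cSup_least)
      show "FF (Kf x) ` cell L \<noteq> {}" using y0 by (auto simp: cell_def)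
      fix r assume "r \<in> FF (Kf x) ` cell L"
      then obtain y where y: "Lf y = L" "r = FF (Kf x) y" by (auto simp: cell_def)
      have "FF (Kf x) y + GG (Lf y) x + HH (x, y) \<le> 0" using gle decomp by metis
      then show "r \<le> - GG L x" using y HHnn[of "(x,y)"] by simp
    qed
  qed
  have a0: "\<alpha> {} L = 0" if "L \<in> LL" for L
  proof -
    have ne: "cell L \<noteq> {}" using that by (auto simp: LL_def cell_def)
    have "FF {} ` cell L = {0}" using ne by (auto simp: FF_def)
    then show ?thesis by (simp add: \<alpha>_def)
  qed
  have "\<exists>p. (\<forall>L\<in>LL. p L > 0) \<and> (\<forall>K\<in>KK - {{}}. (\<Sum>L\<in>LL. p L * \<alpha> K L) > 0)"
  proof (rule ville)
    show "finite (KK - {{}})" using finKK by simp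
    show "finite LL" by fact
    show "\<forall>\<mu>. (\<forall>K\<in>KK - {{}}. 0 \<le> \<mu> K) \<and> (\<forall>L\<in>LL. (\<Sum>K\<in>KK - {{}}. \<mu> K * \<alpha> K L) \<le> 0) \<longrightarrow>
        (\<forall>K\<in>KK - {{}}. \<mu> K = 0)"
    proof (intro allI impI)
      fix \<mu> assume h: "(\<forall>K\<in>KK - {{}}. 0 \<le> \<mu> K) \<and> (\<forall>L\<in>LL. (\<Sum>K\<in>KK - {{}}. \<mu> K * \<alpha> K L) \<le> 0)"
      show "\<forall>K\<in>KK - {{}}. \<mu> K = 0"
      proof (rule ccontr)
        assume "\<not> ?thesis"
        then obtain K0 where K0: "K0 \<in> KK - {{}}" "\<mu> K0 \<noteq> 0" by blast
        have "(\<lambda>y. \<Sum>K\<in>KK - {{}}. \<mu> K * FF K y) \<in> D2"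
          using finKK h K0 KKsub FFD
          by (intro coherent_sum[OF cD2]) (auto intro!: bexI[of _ K0] simp: order_le_less)
        then obtain y where y: "(\<Sum>K\<in>KK - {{}}. \<mu> K * FF K y) > 0" using coherentD(5)[OF cD2] by blast
        have "(\<Sum>K\<in>KK - {{}}. \<mu> K * FF K y) \<le> (\<Sum>K\<in>KK - {{}}. \<mu> K * \<alpha> K (Lf y))"
          using h KKsub alow by (intro sum_mono mult_left_mono) auto
        also have "\<dots> \<le> 0" using h by (auto simp: LL_def)
        finally show False using y by simp
      qed
    qed
  qed
  then obtain p where ppos: "\<forall>L\<in>LL. p L > 0" and prow: "\<forall>K\<in>KK - {{}}. (\<Sum>L\<in>LL. p L * \<alpha> K L) > 0"
    by blast
  have "\<exists>q. (\<forall>K\<in>KK. q K > 0) \<and> (\<forall>L\<in>LL - {{}}. (\<Sum>K\<in>KK. q K * (- \<alpha> K L)) > 0)"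
  proof (rule ville)
    show "finite (LL - {{}})" using finLL by simp
    show "finite KK" by fact
    show "\<forall>\<mu>. (\<forall>L\<in>LL - {{}}. 0 \<le> \<mu> L) \<and> (\<forall>K\<in>KK. (\<Sum>L\<in>LL - {{}}. \<mu> L * (- \<alpha> K L)) \<le> 0) \<longrightarrow>
        (\<forall>L\<in>LL - {{}}. \<mu> L = 0)"
    proof (intro allI impI)
      fix \<mu> assume h: "(\<forall>L\<in>LL - {{}}. 0 \<le> \<mu> L) \<and> (\<forall>K\<in>KK. (\<Sum>L\<in>LL - {{}}. \<mu> L * (- \<alpha> K L)) \<le> 0)"
      show "\<forall>L\<in>LL - {{}}. \<mu> L = 0"
      proof (rule ccontr)
        assume "\<not> ?thesis"
        then obtain L0 where L0: "L0 \<in> LL - {{}}" "\<mu> L0 \<noteq> 0" by blast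
        have "(\<lambda>x. \<Sum>L\<in>LL - {{}}. \<mu> L * GG L x) \<in> D1"
          using finLL h L0 LLsub GGD
          by (intro coherent_sum[OF cD1]) (auto intro!: bexI[of _ L0] simp: order_le_less)
        then obtain x where x: "(\<Sum>L\<in>LL - {{}}. \<mu> L * GG L x) > 0" using coherentD(5)[OF cD1] by blast
        have "(\<Sum>L\<in>LL - {{}}. \<mu> L * GG L x) \<le> (\<Sum>L\<in>LL - {{}}. \<mu> L * (- \<alpha> (Kf x) L))"
        proof (intro sum_mono mult_left_mono)
          fix L assume "L \<in> LL - {{}}"
          then have "L \<in> LL" by blast
          from ahigh[OF this, of x] show "GG L x \<le> - \<alpha> (Kf x) L" by simp
          show "0 \<le> \<mu> L" using h \<open>L \<in> LL - {{}}\<close> by blast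
        qed
        also have "\<dots> \<le> 0" using h by (auto simp: KK_def)
        finally show False using x by simp
      qed
    qed
  qed
  then obtain q where qpos: "\<forall>K\<in>KK. q K > 0" and qcol: "\<forall>L\<in>LL - {{}}. (\<Sum>K\<in>KK. q K * (- \<alpha> K L)) > 0"
    by blast
  define S where "S = (\<Sum>K\<in>KK. q K * (\<Sum>L\<in>LL. p L * \<alpha> K L))"
  have rowterm: "\<forall>K\<in>KK. q K * (\<Sum>L\<in>LL. p L * \<alpha> K L) \<ge> 0"
  proof
    fix K assume K: "K \<in> KK"
    show "q K * (\<Sum>L\<in>LL. p L * \<alpha> K L) \<ge> 0"
    proof (cases "K = {}")
      case True then show ?thesis using a0 by simp
    next
      case False then show ?thesis using prow qpos K by (simp add: less_imp_le)
    qed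
  qed
  have Sswap: "S = (\<Sum>L\<in>LL. p L * (\<Sum>K\<in>KK. q K * \<alpha> K L))"
    unfolding S_def by (simp add: sum_distrib_left sum.swap[of _ KK] algebra_simps)
  have colterm: "\<forall>L\<in>LL. p L * (\<Sum>K\<in>KK. q K * \<alpha> K L) \<le> 0"
  proof
    fix L assume L: "L \<in> LL"
    have "(\<Sum>K\<in>KK. q K * \<alpha> K L) \<le> 0"
    proof (cases "L = {}")
      case True
      have "\<forall>K\<in>KK. \<alpha> K L \<le> 0"
      proof
        fix K assume "K \<in> KK"
        then obtain x where "K = Kf x" by (auto simp: KK_def)
        then show "\<alpha> K L \<le> 0" using ahigh[OF L, of x] True by (simp add: GG_def)
      qed
      then show ?thesis using qpos by (intro sum_nonpos) (simp add: mult_nonneg_nonpos less_imp_le)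
    next
      case False
      then have "(\<Sum>K\<in>KK. q K * (- \<alpha> K L)) > 0" using qcol L by blast
      then show ?thesis by (simp add: sum_negf)
    qed
    then show "p L * (\<Sum>K\<in>KK. q K * \<alpha> K L) \<le> 0" using ppos L by (simp add: mult_nonneg_nonpos less_imp_le)
  qed
  have Sge: "S \<ge> 0" unfolding S_def using rowterm by (intro sum_nonneg) auto
  have Sle: "S \<le> 0" unfolding Sswap using colterm by (intro sum_nonpos) auto
  show False
  proof (cases "T1 = {}")
    case False
    then obtain i0 where i0: "i0 \<in> T1" by blast
    have "C i0 \<noteq> {}" using CB i0 B1 by auto
    then obtain x0 where "x0 \<in> C i0" by blast
    then have K0: "Kf x0 \<in> KK - {{}}" using i0 by (auto simp: Kf_def KK_def)
    have "S > 0" unfolding S_def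
      using finKK K0 rowterm prow qpos by (intro sum_pos2[of _ "Kf x0"]) auto
    then show False using Sle by simp
  next
    case T1e: True
    show False
    proof (cases "T2 = {}")
      case False
      then obtain i0 where i0: "i0 \<in> T2" by blast
      have "E i0 \<noteq> {}" using EB i0 B2 by auto
      then obtain y0 where "y0 \<in> E i0" by blast
      then have L0: "Lf y0 \<in> LL - {{}}" using i0 by (auto simp: Lf_def LL_def)
      have "(\<Sum>K\<in>KK. q K * (- \<alpha> K (Lf y0))) > 0" using qcol L0 by blast
      then have neg: "(\<Sum>K\<in>KK. q K * \<alpha> K (Lf y0)) < 0" by (simp add: sum_negf)
      have "- S > 0" unfolding Sswap sum_negf[symmetric]
      proof (intro sum_pos2[of _ "Lf y0"])
        show "finite LL" by fact
        show "Lf y0 \<in> LL" using L0 by blast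
        show "0 < - (p (Lf y0) * (\<Sum>K\<in>KK. q K * \<alpha> K (Lf y0)))"
          using neg ppos L0 by (simp add: mult_pos_neg)
        fix L assume "L \<in> LL" then show "0 \<le> - (p L * (\<Sum>K\<in>KK. q K * \<alpha> K L))" using colterm by auto
      qed
      then show False using Sge by simp
    next
      case T2e: True
      have "0 \<in> T3" using n T1e T2e by (auto simp: T1_def T2_def T3_def)
      then have "fs 0 \<in> pos_gambles" using fsp by blast
      then have pg: "(\<forall>z. 0 \<le> fs 0 z)" "fs 0 \<noteq> (\<lambda>_. 0)" by (simp_all add: pos_gambles_def)
      from pg(2) obtain z where "fs 0 z \<noteq> 0" by (meson ext)
      moreover have "fs 0 z \<ge> 0" using pg(1) by blast
      ultimately have z: "fs 0 z > 0" by linarith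
      obtain x y where zxy: "z = (x, y)" by (cases z)
      have "lam 0 * fs 0 z \<le> HH z" unfolding HH_def
        using finT \<open>0 \<in> T3\<close> fsnn[of z] lampos
        by (intro member_le_sum[of 0 T3 "\<lambda>i. lam i * fs i z"]) (auto simp: T3_def less_imp_le)
      moreover have "lam 0 * fs 0 z > 0" using z lampos n by simp
      moreover have "g z = HH z" using decomp[of x y] zxy T1e T2e by (simp add: FF_def GG_def Kf_def Lf_def)
      moreover have "g z \<le> 0" using gle[of x y] zxy by simp
      ultimately show False by linarith
    qed
  qed
qed

definition extD :: "('a \<Rightarrow> real) set \<Rightarrow> ('a \<Rightarrow> real) \<Rightarrow> ('a \<Rightarrow> real) set" where
  "extD D f = {h. \<exists>d \<mu>. ((d \<in> D \<and> \<mu> \<ge> 0) \<or> (d = (\<lambda>_. 0) \<and> \<mu> > 0)) \<and> h = (\<lambda>x. d x - \<mu> * f x)}"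

lemma extD_sub: "coherent D \<Longrightarrow> D \<subseteq> extD D f"
  unfolding extD_def by (auto intro!: exI[of _ 0])

lemma extD_neg: "(\<lambda>x. - f x) \<in> extD D f"
  unfolding extD_def by (auto intro!: exI[of _ "\<lambda>_. 0"] exI[of _ 1])

lemma ext_coherent:
  assumes cD: "coherent D" and f: "f \<in> gambles" and nf: "f \<notin> D" and f0: "f \<noteq> (\<lambda>_. 0)"
  shows "coherent (extD D f)"
  unfolding coherent_def
proof (intro conjI ballI allI impI)
  have Dg: "D \<subseteq> gambles" using coherentD(1)[OF cD] .
  show "extD D f \<subseteq> gambles"
  proof
    fix h assume "h \<in> extD D f"
    then obtain d \<mu> where d: "(d \<in> D \<and> \<mu> \<ge> 0) \<or> (d = (\<lambda>_. 0) \<and> \<mu> > 0)" and h: "h = (\<lambda>x. d x - \<mu> * f x)"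
      unfolding extD_def by blast
    have "d \<in> gambles" using d Dg gambles_zero by blast
    then show "h \<in> gambles" unfolding h by (rule gambles_minus[OF _ f])
  qed
  fix h :: "'a \<Rightarrow> real" assume hg: "h \<in> gambles"
  { assume "(\<forall>x. 0 \<le> h x) \<and> h \<noteq> (\<lambda>_. 0)"
    then have "h \<in> D" using coherentD(2)[OF cD hg] by blast
    then show "h \<in> extD D f" using extD_sub[OF cD] by blast }
  { fix lam :: real assume a: "h \<in> extD D f \<and> lam > 0"
    then obtain d \<mu> where d: "(d \<in> D \<and> \<mu> \<ge> 0) \<or> (d = (\<lambda>_. 0) \<and> \<mu> > 0)" and h: "h = (\<lambda>x. d x - \<mu> * f x)"
      unfolding extD_def by blast
    have lam: "lam > 0" using a by blast
    have eq: "(\<lambda>x. lam * h x) = (\<lambda>x. lam * d x - (lam * \<mu>) * f x)" by (simp add: h algebra_simps)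
    have "((\<lambda>x. lam * d x) \<in> D \<and> lam * \<mu> \<ge> 0) \<or> ((\<lambda>x. lam * d x) = (\<lambda>_. 0) \<and> lam * \<mu> > 0)"
      using d lam coherentD(3)[OF cD _ lam] by auto
    then show "(\<lambda>x. lam * h x) \<in> extD D f" unfolding extD_def eq by blast }
  { fix g assume a: "h \<in> extD D f \<and> g \<in> extD D f"
    then obtain d \<mu> where d: "(d \<in> D \<and> \<mu> \<ge> 0) \<or> (d = (\<lambda>_. 0) \<and> \<mu> > 0)" and h: "h = (\<lambda>x. d x - \<mu> * f x)"
      unfolding extD_def by blast
    obtain d' \<mu>' where d': "(d' \<in> D \<and> \<mu>' \<ge> 0) \<or> (d' = (\<lambda>_. 0) \<and> \<mu>' > 0)" and g: "g = (\<lambda>x. d' x - \<mu>' * f x)"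
      using a unfolding extD_def by blast
    have eq: "(\<lambda>x. h x + g x) = (\<lambda>x. (d x + d' x) - (\<mu> + \<mu>') * f x)" by (simp add: h g algebra_simps)
    have "((\<lambda>x. d x + d' x) \<in> D \<and> \<mu> + \<mu>' \<ge> 0) \<or> ((\<lambda>x. d x + d' x) = (\<lambda>_. 0) \<and> \<mu> + \<mu>' > 0)"
      using d d' coherentD(4)[OF cD] by auto
    then show "(\<lambda>x. h x + g x) \<in> extD D f" unfolding extD_def eq by blast }
  { assume hle: "\<forall>x. h x \<le> 0"
    show "h \<notin> extD D f"
    proof
      assume "h \<in> extD D f"
      then obtain d \<mu> where d: "(d \<in> D \<and> \<mu> \<ge> 0) \<or> (d = (\<lambda>_. 0) \<and> \<mu> > 0)" and h: "h = (\<lambda>x. d x - \<mu> * f x)"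
        unfolding extD_def by blast
      have dle: "d x \<le> \<mu> * f x" for x using hle h by (metis diff_le_0_iff_le)
      show False
      proof (cases "d \<in> D \<and> \<mu> \<ge> 0")
        case True
        show False
        proof (cases "\<mu> = 0")
          case True
          then have "\<forall>x. d x \<le> 0" using dle by simp
          then show False using coherentD(5)[OF cD] \<open>d \<in> D \<and> \<mu> \<ge> 0\<close> by (meson not_le)
        next
          case False
          then have mp: "\<mu> > 0" using \<open>d \<in> D \<and> \<mu> \<ge> 0\<close> by simp
          have "(\<lambda>x. (1/\<mu>) * d x) \<in> D" by (rule coherentD(3)[OF cD]) (use True mp in auto)
          moreover have "\<forall>x. (1/\<mu>) * d x \<le> f x" using dle mp by (simp add: field_simps)
          ultimately have "f \<in> D" using coherent_dom[OF cD _ f] by blast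
          then show False using nf by simp
        qed
      next
        case False
        then have d0: "d = (\<lambda>_. 0)" "\<mu> > 0" using d by auto
        then have "\<forall>x. 0 \<le> f x" using dle by (simp add: zero_le_mult_iff)
        then have "f \<in> D" using coherentD(2)[OF cD f] f0 by blast
        then show False using nf by simp
      qed
    qed }
qed

lemma A12_gambles: "D2 \<subseteq> gambles \<Longrightarrow> A12 \<B>1 D2 \<subseteq> gambles"
proof
  fix h assume D2: "D2 \<subseteq> gambles" and "h \<in> A12 \<B>1 D2"
  then obtain f2 B where h: "h = (\<lambda>(x,y). f2 y * indicator B x)" and f2: "f2 \<in> D2"
    unfolding A12_def by blast
  obtain c where c: "\<forall>y. \<bar>f2 y\<bar> \<le> c" using f2 D2 by (auto simp: gambles_def)
  have "\<bar>h z\<bar> \<le> c" for z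
  proof (cases z)
    case (Pair x y)
    have "\<bar>f2 y\<bar> \<le> c" using c by blast
    then show ?thesis using Pair h by (auto simp: indicator_def)
  qed
  then show "h \<in> gambles" by (auto simp: gambles_def)
qed

lemma A21_gambles: "D1 \<subseteq> gambles \<Longrightarrow> A21 \<B>2 D1 \<subseteq> gambles"
proof
  fix h assume D1: "D1 \<subseteq> gambles" and "h \<in> A21 \<B>2 D1"
  then obtain f1 B where h: "h = (\<lambda>(x,y). f1 x * indicator B y)" and f1: "f1 \<in> D1"
    unfolding A21_def by blast
  obtain c where c: "\<forall>y. \<bar>f1 y\<bar> \<le> c" using f1 D1 by (auto simp: gambles_def)
  have "\<bar>h z\<bar> \<le> c" for z
  proof (cases z)
    case (Pair x y)
    have "\<bar>f1 x\<bar> \<le> c" using c by blast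
    then show ?thesis using Pair h by (auto simp: indicator_def)
  qed
  then show "h \<in> gambles" by (auto simp: gambles_def)
qed

lemma marg1_sub:
  fixes \<B>1 :: "'a set set" and \<B>2 :: "'b set set"
    and D1 :: "('a \<Rightarrow> real) set" and D2 :: "('b \<Rightarrow> real) set"
  assumes B1: "{} \<notin> \<B>1" and B2: "{} \<notin> \<B>2" and cD1: "coherent D1" and cD2: "coherent D2"
    and f: "f \<in> gambles" and B: "B \<in> \<B>2 \<union> {UNIV}"
    and h: "(\<lambda>(x,y). f x * indicator B y) \<in> natext (A12 \<B>1 D2 \<union> A21 \<B>2 D1)"
  shows "f \<in> D1"
proof (rule ccontr)
  assume nf: "f \<notin> D1"
  show False
  proof (cases "f = (\<lambda>_. 0)")
    case True
    obtain z where "(\<lambda>(x,y). f x * indicator B y) z > 0" using core[OF B1 B2 cD1 cD2 h] by blast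
    then show False using True by (cases z) simp
  next
    case False
    let ?D = "extD D1 f"
    have cD: "coherent ?D" by (rule ext_coherent[OF cD1 f nf False])
    have sub: "D1 \<subseteq> ?D" by (rule extD_sub[OF cD1])
    have "A21 \<B>2 D1 \<subseteq> A21 \<B>2 ?D" using sub unfolding A21_def by blast
    then have "natext (A12 \<B>1 D2 \<union> A21 \<B>2 D1) \<subseteq> natext (A12 \<B>1 D2 \<union> A21 \<B>2 ?D)"
      by (intro natext_mono) blast
    then have h': "(\<lambda>(x,y). f x * indicator B y) \<in> natext (A12 \<B>1 D2 \<union> A21 \<B>2 ?D)" using h by blast
    have "(\<lambda>(x,y). - f x * indicator B y) \<in> A21 \<B>2 ?D"
      unfolding A21_def using extD_neg[of f D1] B by (intro CollectI exI[of _ "\<lambda>x. - f x"] exI[of _ B]) auto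
    then have m: "(\<lambda>(x,y). - f x * indicator B y) \<in> natext (A12 \<B>1 D2 \<union> A21 \<B>2 ?D)"
      by (intro natext_base) blast
    have "(\<lambda>z. (\<lambda>(x,y). f x * indicator B y) z + (\<lambda>(x,y). - f x * indicator B y) z) \<in> natext (A12 \<B>1 D2 \<union> A21 \<B>2 ?D)"
      by (rule natext_add[OF h' m])
    from core[OF B1 B2 cD cD2 this] obtain z where
      "(\<lambda>(x,y). f x * indicator B y) z + (\<lambda>(x,y). - f x * indicator B y) z > 0" by blast
    then show False by (cases z) simp
  qed
qed

lemma marg2_sub:
  fixes \<B>1 :: "'a set set" and \<B>2 :: "'b set set"
    and D1 :: "('a \<Rightarrow> real) set" and D2 :: "('b \<Rightarrow> real) set"
  assumes B1: "{} \<notin> \<B>1" and B2: "{} \<notin> \<B>2" and cD1: "coherent D1" and cD2: "coherent D2"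
    and f: "f \<in> gambles" and B: "B \<in> \<B>1 \<union> {UNIV}"
    and h: "(\<lambda>(x,y). f y * indicator B x) \<in> natext (A12 \<B>1 D2 \<union> A21 \<B>2 D1)"
  shows "f \<in> D2"
proof (rule ccontr)
  assume nf: "f \<notin> D2"
  show False
  proof (cases "f = (\<lambda>_. 0)")
    case True
    obtain z where "(\<lambda>(x,y). f y * indicator B x) z > 0" using core[OF B1 B2 cD1 cD2 h] by blast
    then show False using True by (cases z) simp
  next
    case False
    let ?D = "extD D2 f"
    have cD: "coherent ?D" by (rule ext_coherent[OF cD2 f nf False])
    have sub: "D2 \<subseteq> ?D" by (rule extD_sub[OF cD2])
    have "A12 \<B>1 D2 \<subseteq> A12 \<B>1 ?D" using sub unfolding A12_def by blast
    then have "natext (A12 \<B>1 D2 \<union> A21 \<B>2 D1) \<subseteq> natext (A12 \<B>1 ?D \<union> A21 \<B>2 D1)"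
      by (intro natext_mono) blast
    then have h': "(\<lambda>(x,y). f y * indicator B x) \<in> natext (A12 \<B>1 ?D \<union> A21 \<B>2 D1)" using h by blast
    have "(\<lambda>(x,y). - f y * indicator B x) \<in> A12 \<B>1 ?D"
      unfolding A12_def using extD_neg[of f D2] B by (intro CollectI exI[of _ "\<lambda>x. - f x"] exI[of _ B]) auto
    then have m: "(\<lambda>(x,y). - f y * indicator B x) \<in> natext (A12 \<B>1 ?D \<union> A21 \<B>2 D1)"
      by (intro natext_base) blast
    have "(\<lambda>z. (\<lambda>(x,y). f y * indicator B x) z + (\<lambda>(x,y). - f y * indicator B x) z) \<in> natext (A12 \<B>1 ?D \<union> A21 \<B>2 D1)"
      by (rule natext_add[OF h' m])
    from core[OF B1 B2 cD1 cD this] obtain z where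
      "(\<lambda>(x,y). f y * indicator B x) z + (\<lambda>(x,y). - f y * indicator B x) z > 0" by blast
    then show False by (cases z) simp
  qed
qed

theorem proposition41:
  fixes \<B>1 :: "'a set set" and \<B>2 :: "'b set set"
    and D1 :: "('a \<Rightarrow> real) set" and D2 :: "('b \<Rightarrow> real) set"
  assumes "{} \<notin> \<B>1" and "{} \<notin> \<B>2"
    and "coherent D1" and "coherent D2"
  shows "independent_product \<B>1 \<B>2 D1 D2 (indep_natext \<B>1 \<B>2 D1 D2)"
proof -
  note B1 = assms(1) and B2 = assms(2) and cD1 = assms(3) and cD2 = assms(4)
  define D where "D = natext (A12 \<B>1 D2 \<union> A21 \<B>2 D1)"
  have Sg: "A12 \<B>1 D2 \<union> A21 \<B>2 D1 \<subseteq> gambles"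
    using A12_gambles[OF coherentD(1)[OF cD2]] A21_gambles[OF coherentD(1)[OF cD1]] by blast
  have cD: "coherent D" unfolding D_def
    using coherent_natext[OF Sg] core[OF B1 B2 cD1 cD2] by blast
  have m1c: "marg1_cond D B = D1" if B: "B \<in> \<B>2 \<union> {UNIV}" for B
  proof
    show "marg1_cond D B \<subseteq> D1"
      using marg1_sub[OF B1 B2 cD1 cD2 _ B] unfolding marg1_cond_def D_def by blast
    show "D1 \<subseteq> marg1_cond D B"
    proof
      fix f assume f: "f \<in> D1"
      have "(\<lambda>(x,y). f x * indicator B y) \<in> A21 \<B>2 D1" unfolding A21_def using f B by blast
      then have "(\<lambda>(x,y). f x * indicator B y) \<in> D" unfolding D_def by (intro natext_base) blast
      then show "f \<in> marg1_cond D B" unfolding marg1_cond_def using f coherentD(1)[OF cD1] by blast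
    qed
  qed
  have m2c: "marg2_cond D B = D2" if B: "B \<in> \<B>1 \<union> {UNIV}" for B
  proof
    show "marg2_cond D B \<subseteq> D2"
      using marg2_sub[OF B1 B2 cD1 cD2 _ B] unfolding marg2_cond_def D_def by blast
    show "D2 \<subseteq> marg2_cond D B"
    proof
      fix f assume f: "f \<in> D2"
      have "(\<lambda>(x,y). f y * indicator B x) \<in> A12 \<B>1 D2" unfolding A12_def using f B by blast
      then have "(\<lambda>(x,y). f y * indicator B x) \<in> D" unfolding D_def by (intro natext_base) blast
      then show "f \<in> marg2_cond D B" unfolding marg2_cond_def using f coherentD(1)[OF cD2] by blast
    qed
  qed
  have m1: "marg1 D = D1"
  proof -
    have "marg1 D = marg1_cond D UNIV" unfolding marg1_def marg1_cond_def by simp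
    then show ?thesis using m1c[of UNIV] by simp
  qed
  have m2: "marg2 D = D2"
  proof -
    have "marg2 D = marg2_cond D UNIV" unfolding marg2_def marg2_cond_def by simp
    then show ?thesis using m2c[of UNIV] by simp
  qed
  show ?thesis
    unfolding independent_product_def epistemically_independent_def indep_natext_def D_def[symmetric]
    using cD m1 m2 m1c m2c by simp
qed

end
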